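(* In the FAVANO process, assume each $\nabla f_i$ is $L$-Lipschitz, the stochastic gradients have bounded variance $\sigma^2$, and $\eta<\frac{1}{4LK^2}$ and $\eta<\frac{1}{2LK}$. Then for every client $i$, time step $t\ge0$ and $q\in\{1,\dots,K\}$, $$\mathbb{E}\langle\nabla f(\mu_t),-h^i_{t+1,q}\rangle\le\frac{\mathbb{E}\|\nabla f(\mu_t)\|^2}{4}+C^i_t-\mathbb{E}\langle\nabla f(\mu_t),\nabla f_i(\mu_t)\rangle,$$ where $C^i_t=4L^2\eta^2K^2\sigma^2+20L^2\,\mathbb{E}\|w^i_t-\mu_t\|^2+16L^2\eta^2K^2\,\mathbb{E}\|\nabla f_i(\mu_t)\|^2$.
   Context: FAVANO process. Fix integers $n\ge1$, $1\le s\le n$, $K\ge1$, $d\ge1$, a step size $\eta>0$ and differentiable $f_1,\dots,f_n:\mathbb{R}^d\to\mathbb{R}$, $f=\frac1n\sum_i f_i$. All random variables live on one probability space. For each client $i$ a stochastic gradient oracle returns, at a query point $x$, $\widetilde g^i(x)=\nabla f_i(x)+\xi$ where, conditionally on everything generated before the query (including $x$), $\xi$ has mean zero (each query uses fresh noise). Initialize $w_0\in\mathbb{R}^d$ deterministic and $w_0^i=w_0$ for all $i$. For each $t\ge1$, each client $i$ and each $q\ge1$ define recursively $\widetilde h^i_{t,q}=\widetilde g^i\big(w^i_{t-1}-\eta\sum_{r=1}^{q-1}\widetilde h^i_{t,r}\big)$ and $h^i_{t,q}=\nabla f_i\big(w^i_{t-1}-\eta\sum_{r=1}^{q-1}\widetilde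 h^i_{t,r}\big)$. At each $t\ge1$ there are random integers $E^1_t,\dots,E^n_t\ge0$ with $\mathbf{P}(E^i_t>0)>0$, and a random subset $\mathcal{S}_t\subseteq\{1,\dots,n\}$ uniformly distributed among subsets of size $s$; the family $(\mathcal S_t,E^1_t,\dots,E^n_t)$ is independent of all the other randomness (the past up to time $t-1$ and all $\widetilde h^i_{t,q}$), and $\mathcal S_t$ is independent of $(E^i_t)_i$. The weight $\alpha^i_t$ is either $\mathbf{P}(E^i_t>0)\,(E^i_t\wedge K)$ (stochastic version) or $\mathbb{E}[E^i_t\wedge K]$ (deterministic version), where $a\wedge b=\min(a,b)$. Set $\check h^i_t=\frac{1}{\alpha^i_t}\sum_{q=1}^{E^i_t\wedge K}\widetilde h^i_{t,q}$ if $E^i_t>0$ and $\check h^i_t=0$ otherwise. Updates: $w_t=\frac{1}{s+1}\big(w_{t-1}+\sum_{i\in\mathcal S_t}(w^i_{t-1}-\eta\check h^i_t)\big)$; $w^i_t=w_t$ for $i\in\mathcal S_t$ and $w^i_t=w^i_{t-1}$ for $i\notin\mathcal S_t$. Define $\mu_t=\frac{1}{n+1}\big(w_t+\sum_{i=1}^n w^i_t\big)$. All expectations appearing are assumed finite. Smoothness: $\|\nabla f_i(x)-\nabla f_i(y)\|\le L\|x-y\|$ for all $i,x,y$, with $L>0$. Bounded variance: conditionally on everything generated before a query at $x$, $\mathbb{E}\|\widetilde g^i(x)-\nabla f_i(x)\|^2\le\sigma^2$. *)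

theory Defs
  imports "HOL-Probability.Probability"
begin

definition preimgs :: "'a measure \<Rightarrow> ('a \<Rightarrow> 'b) \<Rightarrow> 'b measure \<Rightarrow> 'a set set" where
  "preimgs M X N = {X -` B \<inter> space M | B. B \<in> sets N}"

text \<open>Generators of the sigma-algebra of all randomness produced at rounds 1,...,t-1:
  the sampled sets S, the local-step counts E and all oracle noises xi (clients j < n, steps r >= 1).\<close>
definition past_gen :: "'a measure \<Rightarrow> nat \<Rightarrow> (nat \<Rightarrow> 'a \<Rightarrow> nat set) \<Rightarrow> (nat \<Rightarrow> nat \<Rightarrow> 'a \<Rightarrow> nat)
    \<Rightarrow> (nat \<Rightarrow> nat \<Rightarrow> nat \<Rightarrow> 'a \<Rightarrow> 'v::euclidean_space) \<Rightarrow> nat \<Rightarrow> 'a set set" where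
  "past_gen M n S E \<xi> t =
     (\<Union>t'\<in>{1..<t}. preimgs M (S t') (count_space UNIV)
        \<union> (\<Union>j<n. preimgs M (E t' j) (count_space UNIV))
        \<union> (\<Union>j<n. \<Union>r\<in>{1..}. preimgs M (\<xi> t' j r) borel))"

end

theory Submission
  imports Defs
begin

lemma local_bound:
  fixes y :: "nat \<Rightarrow> 'v::euclidean_space" and gi :: "'v \<Rightarrow> 'v" and xi :: "nat \<Rightarrow> 'v"
  assumes Y: "\<forall>q\<ge>1. y q = w - \<eta> *\<^sub>R (\<Sum>r\<in>{1..<q}. gi (y r) + xi r)"
    and Lip: "\<forall>x z. norm (gi x - gi z) \<le> L * norm (x - z)"
    and eta: "0 < \<eta>" and Lp: "0 < L" and small: "\<eta> * L * real K \<le> 1/4"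
    and q0: "q0 \<in> {1..K}"
  shows "norm (y q0 - m) \<le> 4/3 * (norm (w - m) + \<eta> * real K * norm (gi m) + \<eta> * (\<Sum>r\<in>{1..<q0}. norm (xi r)))"
proof -
  define B where "B = norm (w - m) + \<eta> * real K * norm (gi m) + \<eta> * (\<Sum>r\<in>{1..<q0}. norm (xi r))"
  have B0: "0 \<le> B" unfolding B_def using eta by (auto intro!: add_nonneg_nonneg sum_nonneg mult_nonneg_nonneg)
  have main: "1 \<le> q \<longrightarrow> q \<le> q0 \<longrightarrow> norm (y q - m) \<le> 4/3 * B" for q
  proof (induction q rule: less_induct)
    case (less q)
    show ?case
    proof (intro impI)
      assume q1: "1 \<le> q" and qq: "q \<le> q0"
      have IH: "\<And>r. r \<in> {1..<q} \<Longrightarrow> norm (y r - m) \<le> 4/3 * B" using less qq by auto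
      have eq: "y q - m = (w - m) - \<eta> *\<^sub>R (real (q - 1) *\<^sub>R gi m)
           - \<eta> *\<^sub>R (\<Sum>r\<in>{1..<q}. gi (y r) - gi m) - \<eta> *\<^sub>R (\<Sum>r\<in>{1..<q}. xi r)"
      proof -
        have "(\<Sum>r\<in>{1..<q}. gi (y r) + xi r) = (\<Sum>r\<in>{1..<q}. gi (y r) - gi m) + (\<Sum>r\<in>{1..<q}. xi r) + real (q - 1) *\<^sub>R gi m"
          by (simp add: sum.distrib sum_subtractf sum_constant_scaleR)
        moreover have "y q = w - \<eta> *\<^sub>R (\<Sum>r\<in>{1..<q}. gi (y r) + xi r)" using Y q1 by blast
        ultimately show ?thesis by (simp add: algebra_simps)
      qed
      have n1: "norm (\<Sum>r\<in>{1..<q}. gi (y r) - gi m) \<le> real K * (L * (4/3 * B))"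
      proof -
        have "norm (\<Sum>r\<in>{1..<q}. gi (y r) - gi m) \<le> (\<Sum>r\<in>{1..<q}. norm (gi (y r) - gi m))"
          by (rule norm_sum)
        also have "\<dots> \<le> (\<Sum>r\<in>{1..<q}. L * (4/3 * B))"
        proof (rule sum_mono)
          fix r assume r: "r \<in> {1..<q}"
          have "norm (gi (y r) - gi m) \<le> L * norm (y r - m)" using Lip by blast
          also have "\<dots> \<le> L * (4/3 * B)" using IH[OF r] Lp by (simp add: mult_left_mono)
          finally show "norm (gi (y r) - gi m) \<le> L * (4/3 * B)" .
        qed
        also have "\<dots> = real (q - 1) * (L * (4/3 * B))" by simp
        also have "\<dots> \<le> real K * (L * (4/3 * B))"
          using qq q0 Lp B0 by (intro mult_right_mono) auto
        finally show ?thesis .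
      qed
      have n2: "norm (\<Sum>r\<in>{1..<q}. xi r) \<le> (\<Sum>r\<in>{1..<q0}. norm (xi r))"
      proof -
        have "norm (\<Sum>r\<in>{1..<q}. xi r) \<le> (\<Sum>r\<in>{1..<q}. norm (xi r))" by (rule norm_sum)
        also have "\<dots> \<le> (\<Sum>r\<in>{1..<q0}. norm (xi r))"
          using qq by (intro sum_mono2) auto
        finally show ?thesis .
      qed
      have n3: "norm (real (q - 1) *\<^sub>R gi m) \<le> real K * norm (gi m)"
        using qq q0 by (auto intro!: mult_right_mono)
      have "norm (y q - m) \<le> norm (w - m) + \<eta> * norm (real (q - 1) *\<^sub>R gi m)
           + \<eta> * norm (\<Sum>r\<in>{1..<q}. gi (y r) - gi m) + \<eta> * norm (\<Sum>r\<in>{1..<q}. xi r)"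
        unfolding eq using eta
        by (smt (verit, best) norm_scaleR norm_triangle_ineq4 abs_of_pos)
      also have "\<dots> \<le> norm (w - m) + \<eta> * (real K * norm (gi m))
           + \<eta> * (real K * (L * (4/3 * B))) + \<eta> * (\<Sum>r\<in>{1..<q0}. norm (xi r))"
        using n1 n2 n3 eta by (intro add_mono mult_left_mono) auto
      also have "\<dots> = B + (\<eta> * L * real K) * (4/3 * B)" unfolding B_def by (simp add: algebra_simps)
      also have "\<dots> \<le> B + 1/4 * (4/3 * B)" using small B0 by (intro add_left_mono mult_right_mono) auto
      also have "\<dots> = 4/3 * B" by simp
      finally show "norm (y q - m) \<le> 4/3 * B" .
    qed
  qed
  show ?thesis using main[of q0] q0 unfolding B_def by auto
qed

lemma sq2: fixes u v :: real shows "(u + v)\<^sup>2 \<le> 2 * u\<^sup>2 + 2 * v\<^sup>2"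
proof -
  have "0 \<le> (u - v)\<^sup>2" by simp
  thus ?thesis by (simp add: power2_eq_square algebra_simps)
qed

lemma sq3: fixes x y z :: real shows "(x + y + z)\<^sup>2 \<le> 4 * x\<^sup>2 + 4 * y\<^sup>2 + 2 * z\<^sup>2"
  using sq2[of "x+y" z] sq2[of x y] by linarith

lemma young4: fixes x y :: real shows "x * y \<le> x\<^sup>2 / 4 + y\<^sup>2"
proof -
  have "0 \<le> (x/2 - y)\<^sup>2" by simp
  thus ?thesis by (simp add: power2_eq_square algebra_simps)
qed

theorem mainTheorem8:
  fixes M :: "'a measure"
    and n s K :: nat and \<eta> L \<sigma> :: real
    and f :: "nat \<Rightarrow> 'v::euclidean_space \<Rightarrow> real" and grad :: "nat \<Rightarrow> 'v \<Rightarrow> 'v"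
    and w0 :: 'v
    and \<xi> :: "nat \<Rightarrow> nat \<Rightarrow> nat \<Rightarrow> 'a \<Rightarrow> 'v"
    and Y :: "nat \<Rightarrow> nat \<Rightarrow> nat \<Rightarrow> 'a \<Rightarrow> 'v"
    and S :: "nat \<Rightarrow> 'a \<Rightarrow> nat set" and E :: "nat \<Rightarrow> nat \<Rightarrow> 'a \<Rightarrow> nat"
    and \<alpha> :: "nat \<Rightarrow> nat \<Rightarrow> 'a \<Rightarrow> real"
    and hc :: "nat \<Rightarrow> nat \<Rightarrow> 'a \<Rightarrow> 'v"
    and W :: "nat \<Rightarrow> 'a \<Rightarrow> 'v" and Wc :: "nat \<Rightarrow> nat \<Rightarrow> 'a \<Rightarrow> 'v"
    and \<mu> :: "nat \<Rightarrow> 'a \<Rightarrow> 'v"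
  assumes P: "prob_space M"
    and n_pos: "1 \<le> n" and s_rng: "1 \<le> s" "s \<le> n" and K_pos: "1 \<le> K"
    and eta_pos: "0 < \<eta>"
    \<comment> \<open>differentiability and gradients\<close>
    and grad: "\<forall>i<n. \<forall>x. GDERIV (f i) x :> grad i x"
    \<comment> \<open>smoothness\<close>
    and L_pos: "0 < L"
    and Lip: "\<forall>i<n. \<forall>x y. norm (grad i x - grad i y) \<le> L * norm (x - y)"
    \<comment> \<open>step-size conditions\<close>
    and eta1: "\<eta> < 1 / (4 * L * real K ^ 2)"
    and eta2: "\<eta> < 1 / (2 * L * real K)"
    \<comment> \<open>local iterates: Y t i q is the q-th query point of client i at round t;
        the stochastic gradient returned there is grad i (Y t i q) + xi t i q\<close>
    and Y_def: "\<forall>t\<ge>1. \<forall>i<n. \<forall>q\<ge>1. \<forall>\<omega>\<in>space M.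
        Y t i q \<omega> = Wc (t - 1) i \<omega> - \<eta> *\<^sub>R (\<Sum>r\<in>{1..<q}. grad i (Y t i r \<omega>) + \<xi> t i r \<omega>)"
    \<comment> \<open>oracle noise: measurable, square integrable, conditionally mean zero with
        conditional second moment at most sigma^2 given everything generated before the query\<close>
    and xi_meas: "\<forall>t\<ge>1. \<forall>i<n. \<forall>q\<ge>1. \<xi> t i q \<in> borel_measurable M"
    and xi_int: "\<forall>t\<ge>1. \<forall>i<n. \<forall>q\<ge>1. integrable M (\<xi> t i q) \<and>
        integrable M (\<lambda>\<omega>. (norm (\<xi> t i q \<omega>))\<^sup>2)"
    and xi_mean: "\<forall>t\<ge>1. \<forall>i<n. \<forall>q\<ge>1. \<forall>A\<in>sigma_sets (space M)
          (past_gen M n S E \<xi> t \<union> (\<Union>r\<in>{1..<q}. preimgs M (\<xi> t i r) borel)).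
        (\<integral>\<omega>. indicator A \<omega> *\<^sub>R \<xi> t i q \<omega> \<partial>M) = 0"
    and xi_var: "\<forall>t\<ge>1. \<forall>i<n. \<forall>q\<ge>1. \<forall>A\<in>sigma_sets (space M)
          (past_gen M n S E \<xi> t \<union> (\<Union>r\<in>{1..<q}. preimgs M (\<xi> t i r) borel)).
        (\<integral>\<omega>. indicator A \<omega> * (norm (\<xi> t i q \<omega>))\<^sup>2 \<partial>M) \<le> \<sigma>\<^sup>2 * measure M A"
    \<comment> \<open>client sampling and number of local steps\<close>
    and S_meas: "\<forall>t\<ge>1. S t \<in> measurable M (count_space UNIV)"
    and E_meas: "\<forall>t\<ge>1. \<forall>i<n. E t i \<in> measurable M (count_space UNIV)"
    and S_unif: "\<forall>t\<ge>1. \<forall>A. A \<subseteq> {..<n} \<and> card A = s \<longrightarrow>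
        measure M {\<omega>\<in>space M. S t \<omega> = A} = 1 / real (n choose s)"
    and S_range: "\<forall>t\<ge>1. \<forall>\<omega>\<in>space M. S t \<omega> \<subseteq> {..<n} \<and> card (S t \<omega>) = s"
    and E_pos: "\<forall>t\<ge>1. \<forall>i<n. measure M {\<omega>\<in>space M. 0 < E t i \<omega>} > 0"
    and indep_SE_rest: "\<forall>t\<ge>1. prob_space.indep_set M
        (sigma_sets (space M) (preimgs M (S t) (count_space UNIV)
            \<union> (\<Union>j<n. preimgs M (E t j) (count_space UNIV))))
        (sigma_sets (space M) (past_gen M n S E \<xi> t
            \<union> (\<Union>j<n. \<Union>r\<in>{1..}. preimgs M (\<xi> t j r) borel)))"
    and indep_S_E: "\<forall>t\<ge>1. prob_space.indep_set M
        (sigma_sets (space M) (preimgs M (S t) (count_space UNIV)))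
        (sigma_sets (space M) (\<Union>j<n. preimgs M (E t j) (count_space UNIV)))"
    \<comment> \<open>weights: stochastic version or deterministic version\<close>
    and alpha: "(\<forall>t\<ge>1. \<forall>i<n. \<forall>\<omega>\<in>space M. \<alpha> t i \<omega> =
                   measure M {\<omega>'\<in>space M. 0 < E t i \<omega>'} * real (min (E t i \<omega>) K))
              \<or> (\<forall>t\<ge>1. \<forall>i<n. \<forall>\<omega>\<in>space M. \<alpha> t i \<omega> =
                   (\<integral>\<omega>'. real (min (E t i \<omega>') K) \<partial>M))"
    and hc_def: "\<forall>t\<ge>1. \<forall>i<n. \<forall>\<omega>\<in>space M. hc t i \<omega> =
        (if 0 < E t i \<omega>
         then (1 / \<alpha> t i \<omega>) *\<^sub>R (\<Sum>q\<in>{1..min (E t i \<omega>) K}. grad i (Y t i q \<omega>) + \<xi> t i q \<omega>)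
         else 0)"
    \<comment> \<open>server / client updates\<close>
    and W0: "\<forall>\<omega>\<in>space M. W 0 \<omega> = w0" and Wc0: "\<forall>i<n. \<forall>\<omega>\<in>space M. Wc 0 i \<omega> = w0"
    and W_step: "\<forall>t\<ge>1. \<forall>\<omega>\<in>space M. W t \<omega> = (1 / (real s + 1)) *\<^sub>R
        (W (t - 1) \<omega> + (\<Sum>i\<in>S t \<omega>. Wc (t - 1) i \<omega> - \<eta> *\<^sub>R hc t i \<omega>))"
    and Wc_step: "\<forall>t\<ge>1. \<forall>i<n. \<forall>\<omega>\<in>space M.
        Wc t i \<omega> = (if i \<in> S t \<omega> then W t \<omega> else Wc (t - 1) i \<omega>)"
    and mu_def: "\<forall>t. \<forall>\<omega>\<in>space M. \<mu> t \<omega> = (1 / (real n + 1)) *\<^sub>R (W t \<omega> + (\<Sum>i<n. Wc t i \<omega>))"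
    \<comment> \<open>finiteness of the expectations appearing in the statement\<close>
    and int_fin: "\<forall>t. \<forall>i<n. \<forall>q\<in>{1..K}.
        integrable M (\<lambda>\<omega>. inner ((1 / real n) *\<^sub>R (\<Sum>j<n. grad j (\<mu> t \<omega>))) (- grad i (Y (Suc t) i q \<omega>)))
      \<and> integrable M (\<lambda>\<omega>. (norm ((1 / real n) *\<^sub>R (\<Sum>j<n. grad j (\<mu> t \<omega>))))\<^sup>2)
      \<and> integrable M (\<lambda>\<omega>. inner ((1 / real n) *\<^sub>R (\<Sum>j<n. grad j (\<mu> t \<omega>))) (grad i (\<mu> t \<omega>)))
      \<and> integrable M (\<lambda>\<omega>. (norm (Wc t i \<omega> - \<mu> t \<omega>))\<^sup>2)
      \<and> integrable M (\<lambda>\<omega>. (norm (grad i (\<mu> t \<omega>)))\<^sup>2)"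
  shows "\<forall>i<n. \<forall>t. \<forall>q\<in>{1..K}.
    (\<integral>\<omega>. inner ((1 / real n) *\<^sub>R (\<Sum>j<n. grad j (\<mu> t \<omega>))) (- grad i (Y (Suc t) i q \<omega>)) \<partial>M)
    \<le> (\<integral>\<omega>. (norm ((1 / real n) *\<^sub>R (\<Sum>j<n. grad j (\<mu> t \<omega>))))\<^sup>2 \<partial>M) / 4
       + (4 * L\<^sup>2 * \<eta>\<^sup>2 * (real K)\<^sup>2 * \<sigma>\<^sup>2
          + 20 * L\<^sup>2 * (\<integral>\<omega>. (norm (Wc t i \<omega> - \<mu> t \<omega>))\<^sup>2 \<partial>M)
          + 16 * L\<^sup>2 * \<eta>\<^sup>2 * (real K)\<^sup>2 * (\<integral>\<omega>. (norm (grad i (\<mu> t \<omega>)))\<^sup>2 \<partial>M))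
       - (\<integral>\<omega>. inner ((1 / real n) *\<^sub>R (\<Sum>j<n. grad j (\<mu> t \<omega>))) (grad i (\<mu> t \<omega>)) \<partial>M)"
proof (intro allI impI ballI)
  fix i t q assume i: "i < n" and q: "q \<in> {1..K}"
  interpret prob_space M by (rule P)
  define g where "g = (\<lambda>\<omega>. (1 / real n) *\<^sub>R (\<Sum>j<n. grad j (\<mu> t \<omega>)))"
  define R where "R = (\<lambda>\<omega>. (norm (g \<omega>))\<^sup>2 / 4 + 64/9 * L\<^sup>2 * (norm (Wc t i \<omega> - \<mu> t \<omega>))\<^sup>2
      + 64/9 * L\<^sup>2 * \<eta>\<^sup>2 * (real K)\<^sup>2 * (norm (grad i (\<mu> t \<omega>)))\<^sup>2
      + 32/9 * L\<^sup>2 * \<eta>\<^sup>2 * real K * (\<Sum>r\<in>{1..<q}. (norm (\<xi> (Suc t) i r \<omega>))\<^sup>2)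
      - inner (g \<omega>) (grad i (\<mu> t \<omega>)))"
  have small: "\<eta> * L * real K \<le> 1/4"
  proof -
    have K1: "1 \<le> real K" using K_pos by simp
    have "\<eta> * (4 * L * real K ^ 2) < 1" using eta1 L_pos K1
      by (simp add: field_simps)
    hence "\<eta> * L * real K ^ 2 < 1/4" by (simp add: algebra_simps)
    moreover have "\<eta> * L * real K \<le> \<eta> * L * real K ^ 2"
      using K1 eta_pos L_pos by (simp add: power2_eq_square)
    ultimately show ?thesis by linarith
  qed
  have pw: "inner (g \<omega>) (- grad i (Y (Suc t) i q \<omega>)) \<le> R \<omega>" if \<omega>: "\<omega> \<in> space M" for \<omega>
  proof -
    define a where "a = norm (Wc t i \<omega> - \<mu> t \<omega>)"
    define b where "b = norm (grad i (\<mu> t \<omega>))"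
    define X where "X = (\<Sum>r\<in>{1..<q}. norm (\<xi> (Suc t) i r \<omega>))"
    define D where "D = norm (Y (Suc t) i q \<omega> - \<mu> t \<omega>)"
    have a0: "0 \<le> a" and b0: "0 \<le> b" and X0: "0 \<le> X" and D0: "0 \<le> D"
      unfolding a_def b_def X_def D_def by (auto intro: sum_nonneg)
    have Yrec: "\<forall>qq\<ge>1. Y (Suc t) i qq \<omega> = Wc t i \<omega> - \<eta> *\<^sub>R (\<Sum>r\<in>{1..<qq}. grad i (Y (Suc t) i r \<omega>) + \<xi> (Suc t) i r \<omega>)"
    proof (intro allI impI)
      fix qq :: nat assume "1 \<le> qq"
      then show "Y (Suc t) i qq \<omega> = Wc t i \<omega> - \<eta> *\<^sub>R (\<Sum>r\<in>{1..<qq}. grad i (Y (Suc t) i r \<omega>) + \<xi> (Suc t) i r \<omega>)"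
        using Y_def[rule_format, of "Suc t" i qq \<omega>] i \<omega> by simp
    qed
    have Lipi: "\<forall>x z. norm (grad i x - grad i z) \<le> L * norm (x - z)" using Lip i by blast
    have Dle: "D \<le> 4/3 * (a + \<eta> * real K * b + \<eta> * X)"
      unfolding D_def a_def b_def X_def
      by (rule local_bound[where y="\<lambda>r. Y (Suc t) i r \<omega>" and xi="\<lambda>r. \<xi> (Suc t) i r \<omega>", OF Yrec Lipi eta_pos L_pos small q])
    have X2: "X\<^sup>2 \<le> real K * (\<Sum>r\<in>{1..<q}. (norm (\<xi> (Suc t) i r \<omega>))\<^sup>2)"
    proof -
      have "X\<^sup>2 \<le> (\<Sum>r\<in>{1..<q}. (norm (\<xi> (Suc t) i r \<omega>))\<^sup>2) * card {1..<q}"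
        unfolding X_def by (rule sum_squared_le_sum_of_squares)
      also have "\<dots> \<le> (\<Sum>r\<in>{1..<q}. (norm (\<xi> (Suc t) i r \<omega>))\<^sup>2) * real K"
        using q by (intro mult_left_mono sum_nonneg) auto
      finally show ?thesis by (simp add: mult.commute)
    qed
    have sq1: "(a + \<eta> * real K * b + \<eta> * X)\<^sup>2 \<le> 4 * a\<^sup>2 + 4 * (\<eta> * real K * b)\<^sup>2 + 2 * (\<eta> * X)\<^sup>2"
      by (rule sq3)
    have D2: "D\<^sup>2 \<le> 16/9 * (a + \<eta> * real K * b + \<eta> * X)\<^sup>2"
    proof -
      have "D\<^sup>2 \<le> (4/3 * (a + \<eta> * real K * b + \<eta> * X))\<^sup>2"
        using Dle D0 by (intro power_mono) auto
      moreover have "(4/3 * x)\<^sup>2 = 16/9 * x\<^sup>2" for x :: real by (simp add: power2_eq_square)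
      ultimately show ?thesis by metis
    qed
    have LD: "L\<^sup>2 * D\<^sup>2 \<le> 64/9 * L\<^sup>2 * a\<^sup>2 + 64/9 * L\<^sup>2 * \<eta>\<^sup>2 * (real K)\<^sup>2 * b\<^sup>2
        + 32/9 * L\<^sup>2 * \<eta>\<^sup>2 * real K * (\<Sum>r\<in>{1..<q}. (norm (\<xi> (Suc t) i r \<omega>))\<^sup>2)"
    proof -
      have "D\<^sup>2 \<le> 16/9 * (4 * a\<^sup>2 + 4 * (\<eta> * real K * b)\<^sup>2 + 2 * (\<eta> * X)\<^sup>2)"
        using D2 mult_left_mono[OF sq1, of "16/9"] by linarith
      also have "\<dots> \<le> 16/9 * (4 * a\<^sup>2 + 4 * (\<eta> * real K * b)\<^sup>2 + 2 * (\<eta>\<^sup>2 * (real K * (\<Sum>r\<in>{1..<q}. (norm (\<xi> (Suc t) i r \<omega>))\<^sup>2))))"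
        using X2 by (simp add: power_mult_distrib mult_left_mono)
      finally have "D\<^sup>2 \<le> \<dots>" .
      hence "L\<^sup>2 * D\<^sup>2 \<le> L\<^sup>2 * (16/9 * (4 * a\<^sup>2 + 4 * (\<eta> * real K * b)\<^sup>2 + 2 * (\<eta>\<^sup>2 * (real K * (\<Sum>r\<in>{1..<q}. (norm (\<xi> (Suc t) i r \<omega>))\<^sup>2)))))"
        by (rule mult_left_mono) simp
      thus ?thesis by (simp add: algebra_simps power_mult_distrib)
    qed
    have "inner (g \<omega>) (grad i (\<mu> t \<omega>) - grad i (Y (Suc t) i q \<omega>)) \<le> norm (g \<omega>) * norm (grad i (\<mu> t \<omega>) - grad i (Y (Suc t) i q \<omega>))"
      by (rule norm_cauchy_schwarz)
    also have "\<dots> \<le> norm (g \<omega>) * (L * D)"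
    proof -
      have "norm (grad i (\<mu> t \<omega>) - grad i (Y (Suc t) i q \<omega>)) \<le> L * D"
        using Lipi unfolding D_def by (metis norm_minus_commute)
      thus ?thesis by (simp add: mult_left_mono)
    qed
    also have "\<dots> \<le> (norm (g \<omega>))\<^sup>2 / 4 + L\<^sup>2 * D\<^sup>2"
      using young4[of "norm (g \<omega>)" "L * D"] by (simp add: power_mult_distrib)
    finally have "inner (g \<omega>) (grad i (\<mu> t \<omega>) - grad i (Y (Suc t) i q \<omega>)) \<le> (norm (g \<omega>))\<^sup>2 / 4 + L\<^sup>2 * D\<^sup>2" .
    moreover have "inner (g \<omega>) (- grad i (Y (Suc t) i q \<omega>)) = inner (g \<omega>) (grad i (\<mu> t \<omega>) - grad i (Y (Suc t) i q \<omega>)) - inner (g \<omega>) (grad i (\<mu> t \<omega>))"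
      by (simp add: inner_diff_right)
    ultimately show ?thesis using LD unfolding R_def a_def b_def by linarith
  qed
  have IF: "integrable M (\<lambda>\<omega>. inner (g \<omega>) (- grad i (Y (Suc t) i q \<omega>)))"
      "integrable M (\<lambda>\<omega>. (norm (g \<omega>))\<^sup>2)"
      "integrable M (\<lambda>\<omega>. inner (g \<omega>) (grad i (\<mu> t \<omega>)))"
      "integrable M (\<lambda>\<omega>. (norm (Wc t i \<omega> - \<mu> t \<omega>))\<^sup>2)"
      "integrable M (\<lambda>\<omega>. (norm (grad i (\<mu> t \<omega>)))\<^sup>2)"
    using int_fin i q unfolding g_def by blast+
  have Ixi: "integrable M (\<lambda>\<omega>. (norm (\<xi> (Suc t) i r \<omega>))\<^sup>2)" if "r \<in> {1..<q}" for r
    using xi_int i that by auto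
  have Exi: "(\<integral>\<omega>. (norm (\<xi> (Suc t) i r \<omega>))\<^sup>2 \<partial>M) \<le> \<sigma>\<^sup>2" if r: "r \<in> {1..<q}" for r
  proof -
    have A: "space M \<in> sigma_sets (space M)
          (past_gen M n S E \<xi> (Suc t) \<union> (\<Union>r'\<in>{1..<r}. preimgs M (\<xi> (Suc t) i r') borel))"
      by (rule sigma_sets_top)
    have "(\<integral>\<omega>. indicator (space M) \<omega> * (norm (\<xi> (Suc t) i r \<omega>))\<^sup>2 \<partial>M) \<le> \<sigma>\<^sup>2 * measure M (space M)"
      using xi_var[rule_format, of "Suc t" i r, OF _ i _ A] r by auto
    moreover have "(\<integral>\<omega>. indicator (space M) \<omega> * (norm (\<xi> (Suc t) i r \<omega>))\<^sup>2 \<partial>M) = (\<integral>\<omega>. (norm (\<xi> (Suc t) i r \<omega>))\<^sup>2 \<partial>M)"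
      by (rule Bochner_Integration.integral_cong) auto
    ultimately show ?thesis using prob_space by simp
  qed
  have IR: "integrable M R"
    unfolding R_def using IF Ixi by (intro Bochner_Integration.integrable_add Bochner_Integration.integrable_diff
        Bochner_Integration.integrable_mult_right Bochner_Integration.integrable_divide_zero
        Bochner_Integration.integrable_sum) auto
  have "(\<integral>\<omega>. inner (g \<omega>) (- grad i (Y (Suc t) i q \<omega>)) \<partial>M) \<le> integral\<^sup>L M R"
    using IF(1) IR pw by (rule integral_mono)
  also have "integral\<^sup>L M R = (\<integral>\<omega>. (norm (g \<omega>))\<^sup>2 \<partial>M) / 4
      + 64/9 * L\<^sup>2 * (\<integral>\<omega>. (norm (Wc t i \<omega> - \<mu> t \<omega>))\<^sup>2 \<partial>M)
      + 64/9 * L\<^sup>2 * \<eta>\<^sup>2 * (real K)\<^sup>2 * (\<integral>\<omega>. (norm (grad i (\<mu> t \<omega>)))\<^sup>2 \<partial>M)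
      + 32/9 * L\<^sup>2 * \<eta>\<^sup>2 * real K * (\<Sum>r\<in>{1..<q}. (\<integral>\<omega>. (norm (\<xi> (Suc t) i r \<omega>))\<^sup>2 \<partial>M))
      - (\<integral>\<omega>. inner (g \<omega>) (grad i (\<mu> t \<omega>)) \<partial>M)"
    unfolding R_def
    by (intro has_bochner_integral_integral_eq has_bochner_integral_add has_bochner_integral_diff
        has_bochner_integral_mult_right has_bochner_integral_divide_zero has_bochner_integral_sum
        has_bochner_integral_integrable IF Ixi)
  also have "\<dots> \<le> (\<integral>\<omega>. (norm (g \<omega>))\<^sup>2 \<partial>M) / 4
      + (4 * L\<^sup>2 * \<eta>\<^sup>2 * (real K)\<^sup>2 * \<sigma>\<^sup>2
         + 20 * L\<^sup>2 * (\<integral>\<omega>. (norm (Wc t i \<omega> - \<mu> t \<omega>))\<^sup>2 \<partial>M)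
         + 16 * L\<^sup>2 * \<eta>\<^sup>2 * (real K)\<^sup>2 * (\<integral>\<omega>. (norm (grad i (\<mu> t \<omega>)))\<^sup>2 \<partial>M))
      - (\<integral>\<omega>. inner (g \<omega>) (grad i (\<mu> t \<omega>)) \<partial>M)"
  proof -
    have a: "0 \<le> (\<integral>\<omega>. (norm (Wc t i \<omega> - \<mu> t \<omega>))\<^sup>2 \<partial>M)" by (rule Bochner_Integration.integral_nonneg) auto
    have b: "0 \<le> (\<integral>\<omega>. (norm (grad i (\<mu> t \<omega>)))\<^sup>2 \<partial>M)" by (rule Bochner_Integration.integral_nonneg) auto
    have c0: "0 \<le> L\<^sup>2 * \<eta>\<^sup>2" by simp
    have s: "(\<Sum>r\<in>{1..<q}. (\<integral>\<omega>. (norm (\<xi> (Suc t) i r \<omega>))\<^sup>2 \<partial>M)) \<le> real K * \<sigma>\<^sup>2"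
    proof -
      have "(\<Sum>r\<in>{1..<q}. (\<integral>\<omega>. (norm (\<xi> (Suc t) i r \<omega>))\<^sup>2 \<partial>M)) \<le> (\<Sum>r\<in>{1..<q}. \<sigma>\<^sup>2)"
        using Exi by (rule sum_mono)
      also have "\<dots> = real (q - 1) * \<sigma>\<^sup>2" by simp
      also have "\<dots> \<le> real K * \<sigma>\<^sup>2" using q by (intro mult_right_mono) auto
      finally show ?thesis .
    qed
    have "32/9 * L\<^sup>2 * \<eta>\<^sup>2 * real K * (\<Sum>r\<in>{1..<q}. (\<integral>\<omega>. (norm (\<xi> (Suc t) i r \<omega>))\<^sup>2 \<partial>M))
        \<le> 32/9 * L\<^sup>2 * \<eta>\<^sup>2 * real K * (real K * \<sigma>\<^sup>2)"
      using s c0 by (intro mult_left_mono) auto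
    also have "\<dots> \<le> 4 * L\<^sup>2 * \<eta>\<^sup>2 * (real K)\<^sup>2 * \<sigma>\<^sup>2"
    proof -
      have "0 \<le> L\<^sup>2 * \<eta>\<^sup>2 * (real K)\<^sup>2 * \<sigma>\<^sup>2" by simp
      thus ?thesis by (simp add: power2_eq_square algebra_simps)
    qed
    finally have x: "32/9 * L\<^sup>2 * \<eta>\<^sup>2 * real K * (\<Sum>r\<in>{1..<q}. (\<integral>\<omega>. (norm (\<xi> (Suc t) i r \<omega>))\<^sup>2 \<partial>M))
        \<le> 4 * L\<^sup>2 * \<eta>\<^sup>2 * (real K)\<^sup>2 * \<sigma>\<^sup>2" .
    have y: "64/9 * L\<^sup>2 * (\<integral>\<omega>. (norm (Wc t i \<omega> - \<mu> t \<omega>))\<^sup>2 \<partial>M) \<le> 20 * L\<^sup>2 * (\<integral>\<omega>. (norm (Wc t i \<omega> - \<mu> t \<omega>))\<^sup>2 \<partial>M)"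
      using a by (intro mult_right_mono) auto
    have z: "64/9 * L\<^sup>2 * \<eta>\<^sup>2 * (real K)\<^sup>2 * (\<integral>\<omega>. (norm (grad i (\<mu> t \<omega>)))\<^sup>2 \<partial>M) \<le> 16 * L\<^sup>2 * \<eta>\<^sup>2 * (real K)\<^sup>2 * (\<integral>\<omega>. (norm (grad i (\<mu> t \<omega>)))\<^sup>2 \<partial>M)"
      using b by (intro mult_right_mono) auto
    show ?thesis using x y z by linarith
  qed
  finally show "(\<integral>\<omega>. inner ((1 / real n) *\<^sub>R (\<Sum>j<n. grad j (\<mu> t \<omega>))) (- grad i (Y (Suc t) i q \<omega>)) \<partial>M)
    \<le> (\<integral>\<omega>. (norm ((1 / real n) *\<^sub>R (\<Sum>j<n. grad j (\<mu> t \<omega>))))\<^sup>2 \<partial>M) / 4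
       + (4 * L\<^sup>2 * \<eta>\<^sup>2 * (real K)\<^sup>2 * \<sigma>\<^sup>2
          + 20 * L\<^sup>2 * (\<integral>\<omega>. (norm (Wc t i \<omega> - \<mu> t \<omega>))\<^sup>2 \<partial>M)
          + 16 * L\<^sup>2 * \<eta>\<^sup>2 * (real K)\<^sup>2 * (\<integral>\<omega>. (norm (grad i (\<mu> t \<omega>)))\<^sup>2 \<partial>M))
       - (\<integral>\<omega>. inner ((1 / real n) *\<^sub>R (\<Sum>j<n. grad j (\<mu> t \<omega>))) (grad i (\<mu> t \<omega>)) \<partial>M)" by (simp only: g_def)
qed

end
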